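(* The triangle $T=P_1P_2P_3$ is never equilateral, so its Euler line (the line through its centroid $O$ and its circumcenter) is well defined. Suppose that for each pair of corresponding sides, the lines $P_jP_k$ and $P_j'P_k'$ ($\{j,k\}\subset\{1,2,3\}$) are not parallel. Then the three intersection points $P_jP_k\cap P_j'P_k'$ lie on a line (the perspectrix of the perspective triangles $T$ and $T'=P_1'P_2'P_3'$), and this line is perpendicular to the Euler line of $T$.
   Context: Let $a>b>0$ and $c>0$ with $c^2=a^2-b^2$. Let $\mathcal{E}$ be the ellipse $x^2/a^2+y^2/b^2=1$ with center $O=(0,0)$, parametrized by $P(t)=(a\cos t,b\sin t)$. Fix $u\in\mathbb{R}$, let $M=(a\cos u,b\sin u)$ and $\Delta_u(t)=(x_u(t),y_u(t))$, where $x_u(t)=\frac1a\big(c^2(1+\cos(t+u))\cos t-a^2\cos u\big)$ and $y_u(t)=\frac1b\big(c^2\cos t\sin(t+u)-c^2\sin t-a^2\sin u\big)$ (the negative pedal curve of $\mathcal{E}$ with respect to $M$). For $i=1,2,3$ let $t_i=-u/3-2\pi(i-1)/3$, $P_i=P(t_i)$, $P_i'=\Delta_u(t_i)$ (the cusps). *)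

theory Defs
  imports "HOL-Analysis.Analysis"
begin

definition ell_pt :: "real \<Rightarrow> real \<Rightarrow> real \<Rightarrow> real \<times> real" where
  "ell_pt a b t = (a * cos t, b * sin t)"

text \<open>Negative pedal curve of the ellipse with respect to M = P(u).\<close>
definition neg_pedal :: "real \<Rightarrow> real \<Rightarrow> real \<Rightarrow> real \<Rightarrow> real \<Rightarrow> real \<times> real" where
  "neg_pedal a b c u t =
     ((c^2 * (1 + cos (t + u)) * cos t - a^2 * cos u) / a,
      (c^2 * cos t * sin (t + u) - c^2 * sin t - a^2 * sin u) / b)"

definition cusp_par :: "real \<Rightarrow> nat \<Rightarrow> real" where
  "cusp_par u i = - u / 3 - 2 * pi * (real i - 1) / 3"

definition line_through :: "real \<times> real \<Rightarrow> real \<times> real \<Rightarrow> (real \<times> real) set" where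
  "line_through A B = {A + t *\<^sub>R (B - A) | t. True}"

definition cross2 :: "real \<times> real \<Rightarrow> real \<times> real \<Rightarrow> real" where
  "cross2 v w = fst v * snd w - snd v * fst w"

definition parallel_lines :: "real \<times> real \<Rightarrow> real \<times> real \<Rightarrow> real \<times> real \<Rightarrow> real \<times> real \<Rightarrow> bool" where
  "parallel_lines A B C D \<longleftrightarrow> cross2 (B - A) (D - C) = 0"

definition line_inter :: "real \<times> real \<Rightarrow> real \<times> real \<Rightarrow> real \<times> real \<Rightarrow> real \<times> real \<Rightarrow> real \<times> real" where
  "line_inter A B C D = (THE Q. Q \<in> line_through A B \<and> Q \<in> line_through C D)"

definition centroid3 :: "real \<times> real \<Rightarrow> real \<times> real \<Rightarrow> real \<times> real \<Rightarrow> real \<times> real" where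
  "centroid3 A B C = (1/3) *\<^sub>R (A + B + C)"

definition circumcenter :: "real \<times> real \<Rightarrow> real \<times> real \<Rightarrow> real \<times> real \<Rightarrow> real \<times> real" where
  "circumcenter A B C = (THE X. dist X A = dist X B \<and> dist X B = dist X C)"

definition equilateral :: "real \<times> real \<Rightarrow> real \<times> real \<Rightarrow> real \<times> real \<Rightarrow> bool" where
  "equilateral A B C \<longleftrightarrow> dist A B = dist B C \<and> dist B C = dist C A"

end

theory Submission
  imports Defs
begin


lemma key0:
  fixes a b c k p q g h x y :: real
  assumes "k = a^2+b^2" "c^2 = a^2-b^2" "p^2+q^2=1" "g = p*(4* q^2-1)" "h = q*(1-4* p^2)"
    "p* x+q* y = 1/2" "-2* a^2* p* x + 2* b^2* q* y = -3* c^2/2 + k*(p* g+q* h)"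
  shows "k*(g* x+h* y) = c^2"
  using assms by algebra

lemma line_inter_mem:
  assumes "cross2 (B - A) (D - C) \<noteq> 0"
  shows "line_inter A B C D \<in> line_through A B \<and> line_inter A B C D \<in> line_through C D"
proof -
  obtain a1 a2 where A: "A = (a1,a2)" by fastforce
  obtain b1 b2 where B: "B = (b1,b2)" by fastforce
  obtain c1 c2 where C: "C = (c1,c2)" by fastforce
  obtain d1 d2 where D: "D = (d1,d2)" by fastforce
  define cr where "cr = (b1-a1)*(d2-c2) - (b2-a2)*(d1-c1)"
  have cr: "cr \<noteq> 0" using assms by (simp add: A B C D cross2_def cr_def)
  define t where "t = ((c1-a1)*(d2-c2) - (c2-a2)*(d1-c1)) / cr"
  define s where "s = ((c1-a1)*(b2-a2) - (c2-a2)*(b1-a1)) / cr"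
  define Q where "Q = A + t *\<^sub>R (B - A)"
  have Q1: "Q \<in> line_through A B" unfolding line_through_def Q_def by blast
  have "Q = C + s *\<^sub>R (D - C)"
    using cr unfolding Q_def A B C D t_def s_def cr_def
    by (simp add: field_simps)
  hence Q2: "Q \<in> line_through C D" unfolding line_through_def by blast
  have uniq: "R = Q" if R1: "R \<in> line_through A B" and R2: "R \<in> line_through C D" for R
  proof -
    obtain t1 where t1: "R = A + t1 *\<^sub>R (B - A)" using R1 unfolding line_through_def by blast
    obtain s1 where s1: "R = C + s1 *\<^sub>R (D - C)" using R2 unfolding line_through_def by blast
    have e1: "a1 + t1*(b1-a1) = c1 + s1*(d1-c1)" "a2 + t1*(b2-a2) = c2 + s1*(d2-c2)"
      using t1 s1 by (auto simp: A B C D)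
    have "t1 * cr = (c1-a1)*(d2-c2) - (c2-a2)*(d1-c1)"
      unfolding cr_def using e1 by algebra
    hence "t1 = t" using cr unfolding t_def by (simp add: field_simps)
    thus ?thesis using t1 Q_def by simp
  qed
  have "line_inter A B C D = Q"
    unfolding line_inter_def using Q1 Q2 uniq by blast
  thus ?thesis using Q1 Q2 by simp
qed



lemma sin_treble: "sin (3*(t::real)) = 3 * sin t - 4 * sin t ^ 3"
proof -
  have "sin (3* t) = sin (2* t + t)" by simp
  also have "\<dots> = sin (2* t) * cos t + cos (2* t) * sin t" by (rule sin_add)
  also have "\<dots> = 3 * sin t - 4 * sin t ^ 3"
    using sin_cos_squared_add[of t] unfolding sin_double cos_double by algebra
  finally show ?thesis .
qed

lemma pedal:
  fixes a b c u t :: real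
  assumes "cos u = cos (3* t)" "sin u = - sin (3* t)" "a \<noteq> 0" "b \<noteq> 0" "c^2 = a^2-b^2"
  shows "neg_pedal a b c u t = (3* c^2/(2* a)* cos t - (a^2+b^2)* cos u/(2* a),
                                 -3* c^2/(2* b)* sin t - (a^2+b^2)* sin u/(2* b))"
proof -
  have cu: "cos u = 4 * cos t ^ 3 - 3 * cos t" using assms(1) cos_treble_cos by simp
  have su: "sin u = -(3 * sin t - 4 * sin t ^ 3)" using assms(2) sin_treble by simp
  have ctu: "cos (t+u) = cos t * cos u - sin t * sin u" by (rule cos_add)
  have stu: "sin (t+u) = sin t * cos u + cos t * sin u" by (rule sin_add)
  have sc: "sin t ^2 + cos t ^2 = 1" by simp
  have e1: "c^2 * (1 + cos (t + u)) * cos t - a^2 * cos u = a * (3* c^2/(2* a)* cos t - (a^2+b^2)* cos u/(2* a))"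
  proof -
    have "a * (3* c^2/(2* a)* cos t - (a^2+b^2)* cos u/(2* a)) = (3* c^2* cos t - (a^2+b^2)* cos u)/2"
      using assms(3) by (simp add: field_simps)
    also have "\<dots> = c^2 * (1 + cos (t + u)) * cos t - a^2 * cos u"
      using cu su ctu sc assms(5) by algebra
    finally show ?thesis by simp
  qed
  have e2: "c^2 * cos t * sin (t + u) - c^2 * sin t - a^2 * sin u = b * (-3* c^2/(2* b)* sin t - (a^2+b^2)* sin u/(2* b))"
  proof -
    have "b * (-3* c^2/(2* b)* sin t - (a^2+b^2)* sin u/(2* b)) = (-3* c^2* sin t - (a^2+b^2)* sin u)/2"
      using assms(4) by (simp add: field_simps)
    also have "\<dots> = c^2 * cos t * sin (t + u) - c^2 * sin t - a^2 * sin u"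
      using cu su stu sc assms(5) by algebra
    finally show ?thesis by simp
  qed
  show ?thesis unfolding neg_pedal_def using e1 e2 assms(3,4) by simp
qed

lemma dist_eq_iff:
  "dist (x1::real,x2::real) (a1,a2) = dist (x1,x2) (b1,b2) \<longleftrightarrow>
     (x1-a1)^2+(x2-a2)^2 = (x1-b1)^2+(x2-b2)^2"
  by (simp add: dist_Pair_Pair dist_real_def)

lemma uniq2:
  fixes zx zy ox oy wx wy vx vy :: real
  assumes "(zx-ox) * wx + (zy-oy) * wy = 0" "(zx-ox) *  vx+(zy-oy) *  vy=0" "wx *  vy - wy *  vx \<noteq> 0"
  shows "zx = ox \<and> zy = oy"
proof -
  have "(zx-ox) * (wx *  vy - wy *  vx) = 0" using assms(1,2) by algebra
  moreover have "(zy-oy) * (wx *  vy - wy *  vx) = 0" using assms(1,2) by algebra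
  ultimately show ?thesis using assms(3) by simp
qed

lemma equi_centroid:
  assumes "equilateral A B C"
  shows "dist (centroid3 A B C) A = dist (centroid3 A B C) B \<and> dist (centroid3 A B C) B = dist (centroid3 A B C) C"
proof -
  obtain a1 a2 where A: "A = (a1,a2)" by fastforce
  obtain b1 b2 where B: "B = (b1,b2)" by fastforce
  obtain c1 c2 where C: "C = (c1,c2)" by fastforce
  have G: "centroid3 A B C = ((a1+b1+c1)/3, (a2+b2+c2)/3)"
    unfolding centroid3_def A B C by simp
  have "dist A B = dist B C" "dist B C = dist C A" using assms unfolding equilateral_def by auto
  hence h1: "(a1-b1)^2+(a2-b2)^2 = (b1-c1)^2+(b2-c2)^2" and h2: "(b1-c1)^2+(b2-c2)^2 = (c1-a1)^2+(c2-a2)^2"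
    unfolding A B C dist_Pair_Pair dist_real_def by simp_all
  show ?thesis unfolding G unfolding A B C dist_eq_iff
    using h1 h2 by (simp add: field_simps power2_eq_square)
qed

lemma pairlem:
  fixes a b c k p q g h X1 Y1 X2 Y2 :: real
  assumes "a\<noteq>0" "b\<noteq>0" "k=a^2+b^2" "c^2=a^2-b^2" "p^2+q^2=1" "g=p*(4* q^2-1)" "h = q*(1-4* p^2)"
    "p* X1+q* Y1 = 1/2" "p* X2+q* Y2=1/2"
    "Q \<in> line_through (a* X1, b* Y1) (a* X2, b* Y2)"
    "Q \<in> line_through (3* c^2/(2* a)* X1 - k* g/(2* a), -3* c^2/(2* b)* Y1 + k* h/(2* b))
                       (3* c^2/(2* a)* X2 - k* g/(2* a), -3* c^2/(2* b)* Y2 + k* h/(2* b))"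
  shows "k*(g*(fst Q/a) + h*(snd Q/b)) = c^2"
proof -
  obtain t where t: "Q = (a* X1, b* Y1) + t *\<^sub>R ((a* X2, b* Y2) - (a* X1, b* Y1))"
    using assms(10) unfolding line_through_def by blast
  obtain t' where t': "Q = (3* c^2/(2* a)* X1 - k* g/(2* a), -3* c^2/(2* b)* Y1 + k* h/(2* b)) + t' *\<^sub>R
      ((3* c^2/(2* a)* X2 - k* g/(2* a), -3* c^2/(2* b)* Y2 + k* h/(2* b)) -
       (3* c^2/(2* a)* X1 - k* g/(2* a), -3* c^2/(2* b)* Y1 + k* h/(2* b)))"
    using assms(11) unfolding line_through_def by blast
  define x where "x = fst Q / a"
  define y where "y = snd Q / b"
  have x1: "x = X1 + t*(X2-X1)" using t assms(1) unfolding x_def by (simp add: field_simps)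
  have y1: "y = Y1 + t*(Y2-Y1)" using t assms(2) unfolding y_def by (simp add: field_simps)
  have x2: "2* a^2* x = 3* c^2*(X1 + t'*(X2-X1)) - k* g" using t' assms(1) unfolding x_def
    by (simp add: field_simps power2_eq_square)
  have y2: "2* b^2* y = -3* c^2*(Y1 + t'*(Y2-Y1)) + k* h" using t' assms(2) unfolding y_def
    by (simp add: field_simps power2_eq_square)
  have eq1: "p* x+q* y = 1/2" using x1 y1 assms(8,9) by algebra
  have eq2: "-2* a^2* p* x + 2* b^2* q* y = -3* c^2/2 + k*(p* g+q* h)" using x2 y2 assms(8,9) by algebra
  have "k*(g* x+h* y) = c^2"
    using assms(3-7) eq1 eq2 by algebra
  thus ?thesis unfolding x_def y_def .
qed

lemma on_line:
  fixes m1 m2 K x y :: real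
  assumes "m1* x + m2* y = K" "m1^2+m2^2 \<noteq> 0"
  shows "(x,y) \<in> line_through (K/(m1^2+m2^2)* m1, K/(m1^2+m2^2)* m2)
           ((K/(m1^2+m2^2)* m1, K/(m1^2+m2^2)* m2) + (-m2, m1))"
proof -
  define N where "N = m1^2+m2^2"
  have N: "N \<noteq> 0" using assms(2) N_def by simp
  define \<tau> where "\<tau> = (-x* m2 + y* m1)/N"
  have "(x,y) = (K/N* m1, K/N* m2) + \<tau> *\<^sub>R (((K/N* m1, K/N* m2) + (-m2, m1)) - (K/N* m1, K/N* m2))"
  proof -
    have "x* N = K* m1 - \<tau>* N* m2" unfolding \<tau>_def N_def using N N_def assms(1)
      by (simp add: field_simps) algebra
    moreover have "y* N = K* m2 + \<tau>* N* m1" unfolding \<tau>_def N_def using N N_def assms(1)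
      by (simp add: field_simps) algebra
    ultimately show ?thesis using N by (simp add: field_simps)
  qed
  thus ?thesis unfolding line_through_def N_def by blast
qed


lemma circ:
  fixes a b c g h X Y :: real
  assumes "X^2+Y^2=1" "g=4* X^3-3* X" "h=3* Y-4* Y^3" "a\<noteq>0" "b\<noteq>0" "c^2=a^2-b^2"
  shows "(c^2* g/(4* a) - a* X)^2 + (c^2* h/(4* b) - b* Y)^2 = (c^2* g/(4* a))^2 + (c^2* h/(4* b))^2 + c^2/2 + b^2"
proof -
  have "(c^2* g/(4* a) - a* X)^2 = (c^2* g/(4* a))^2 - c^2* g* X/2 + a^2* X^2"
    using assms(4) by (simp add: power2_eq_square field_simps)
  moreover have "(c^2* h/(4* b) - b* Y)^2 = (c^2* h/(4* b))^2 - c^2* h* Y/2 + b^2* Y^2"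
    using assms(5) by (simp add: power2_eq_square field_simps)
  moreover have "a^2* X^2 - c^2* g* X/2 - c^2* h* Y/2 + b^2* Y^2 = c^2/2 + b^2"
    using assms(1-3,6) by algebra
  ultimately show ?thesis by simp
qed

theorem theorem8p4:
  fixes a b c u :: real
  assumes "a > b" and "b > 0" and "c > 0" and "c^2 = a^2 - b^2"
  defines "P \<equiv> \<lambda>i::nat. ell_pt a b (cusp_par u i)"
    and "P' \<equiv> \<lambda>i::nat. neg_pedal a b c u (cusp_par u i)"
  shows "\<not> equilateral (P 1) (P 2) (P 3) \<and>
    centroid3 (P 1) (P 2) (P 3) = (0, 0) \<and>
    circumcenter (P 1) (P 2) (P 3) \<noteq> centroid3 (P 1) (P 2) (P 3) \<and>
    ((\<forall>j k. j \<in> {1,2,3} \<and> k \<in> {1,2,3} \<and> j < k \<longrightarrow>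
            \<not> parallel_lines (P j) (P k) (P' j) (P' k)) \<longrightarrow>
         (\<exists>p d. d \<noteq> 0 \<and>
            inner d (circumcenter (P 1) (P 2) (P 3) - centroid3 (P 1) (P 2) (P 3)) = 0 \<and>
            (\<forall>j k. j \<in> {1,2,3} \<and> k \<in> {1,2,3} \<and> j < k \<longrightarrow>
               line_inter (P j) (P k) (P' j) (P' k) \<in> line_through p (p + d))))"
proof -
  have a0: "a \<noteq> 0" and b0: "b \<noteq> 0" and c0: "c \<noteq> 0" using assms(1-3) by auto
  note cc = assms(4)
  define k where "k = a^2+b^2"
  define s where "s = -u/3"
  define C where "C = cos s"
  define S where "S = sin s"
  define r where "r = sqrt (3::real)"
  have r3: "r^2 = 3" by (simp add: r_def)
  have r0: "r \<noteq> 0" by (simp add: r_def)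
  have CS: "C^2 + S^2 = 1" by (simp add: C_def S_def)
  define g where "g = cos u"
  define h where "h = - sin u"
  have gh1: "g^2 + h^2 = 1" by (simp add: g_def h_def)
  have us: "u = -(3* s)" by (simp add: s_def)
  have gC: "g = 4* C^3 - 3* C" unfolding g_def C_def us cos_minus by (rule cos_treble_cos)
  have hS: "h = 3* S - 4* S^3" unfolding h_def S_def us sin_minus by (simp add: sin_treble)
  have cp1: "cusp_par u 1 = s" by (simp add: cusp_par_def s_def)
  have cp2: "cusp_par u 2 = (s + pi/3) - pi" by (simp add: cusp_par_def s_def field_simps)
  have cp3: "cusp_par u 3 = (s - pi/3) - pi" by (simp add: cusp_par_def s_def field_simps)
  define X1 where "X1 = C"
  define Y1 where "Y1 = S"
  define X2 where "X2 = -(C/2 - S* r/2)"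
  define Y2 where "Y2 = -(S/2 + C* r/2)"
  define X3 where "X3 = -(C/2 + S* r/2)"
  define Y3 where "Y3 = -(S/2 - C* r/2)"
  have t1: "cos (cusp_par u 1) = X1" "sin (cusp_par u 1) = Y1"
    unfolding cp1 X1_def Y1_def C_def S_def by simp_all
  have t2: "cos (cusp_par u 2) = X2" "sin (cusp_par u 2) = Y2"
    unfolding cp2 cos_diff sin_diff cos_add sin_add cos_60 sin_60 cos_pi sin_pi X2_def Y2_def C_def S_def r_def
    by simp_all
  have t3: "cos (cusp_par u 3) = X3" "sin (cusp_par u 3) = Y3"
    unfolding cp3 cos_diff sin_diff cos_60 sin_60 cos_pi sin_pi X3_def Y3_def C_def S_def r_def
    by simp_all
  have t1s: "cos (cusp_par u (Suc 0)) = X1" "sin (cusp_par u (Suc 0)) = Y1" using t1 by simp_all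
  have P1: "P 1 = (a* X1, b* Y1)" by (simp add: P_def ell_pt_def t1 t1s)
  have P2: "P 2 = (a* X2, b* Y2)" by (simp add: P_def ell_pt_def t2)
  have P3: "P 3 = (a* X3, b* Y3)" by (simp add: P_def ell_pt_def t3)
  have per: "cos (x - 2* pi) = cos x" "sin (x - 2* pi) = sin x" for x
    using cos_periodic[of "x - 2* pi"] sin_periodic[of "x - 2* pi"] by simp_all
  have m1: "3 * cusp_par u 1 = -u" unfolding cp1 s_def by simp
  have m2: "3 * cusp_par u 2 = -u - 2* pi" by (simp add: cp2 s_def field_simps)
  have m3: "3 * cusp_par u 3 = (-u - 2* pi) - 2* pi" by (simp add: cp3 s_def field_simps)
  have m1s: "3 * cusp_par u (Suc 0) = -u" using m1 by simp
  have cs1: "cos u = cos (3 * cusp_par u 1)" "sin u = - sin (3 * cusp_par u 1)"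
    unfolding m1 by simp_all
  have cs2: "cos u = cos (3 * cusp_par u 2)" "sin u = - sin (3 * cusp_par u 2)"
    unfolding m2 per by simp_all
  have cs3: "cos u = cos (3 * cusp_par u 3)" "sin u = - sin (3 * cusp_par u 3)"
    unfolding m3 per by simp_all
  have P'1: "P' 1 = (3* c^2/(2* a)* X1 - k* g/(2* a), -3* c^2/(2* b)* Y1 + k* h/(2* b))"
    unfolding P'_def using pedal[OF cs1 a0 b0 cc] unfolding t1 g_def h_def k_def by simp
  have P'2: "P' 2 = (3* c^2/(2* a)* X2 - k* g/(2* a), -3* c^2/(2* b)* Y2 + k* h/(2* b))"
    unfolding P'_def using pedal[OF cs2 a0 b0 cc] unfolding t2 g_def h_def k_def by simp
  have P'3: "P' 3 = (3* c^2/(2* a)* X3 - k* g/(2* a), -3* c^2/(2* b)* Y3 + k* h/(2* b))"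
    unfolding P'_def using pedal[OF cs3 a0 b0 cc] unfolding t3 g_def h_def k_def by simp
  have cen: "centroid3 (P 1) (P 2) (P 3) = (0, 0)"
    unfolding centroid3_def P1 P2 P3 by (simp add: X1_def X2_def X3_def Y1_def Y2_def Y3_def field_simps)
  define Oc where "Oc = (c^2* g/(4* a), c^2* h/(4* b))"
  have u1: "X1^2+Y1^2=1" "g=4* X1^3-3* X1" "h=3* Y1-4* Y1^3"
    unfolding X1_def Y1_def using CS gC hS by simp_all
  have u2_0: "X2^2+Y2^2=1"
    by (unfold X2_def Y2_def; insert CS gC hS r3; simp add: field_simps; algebra)
  have u2_1: "g=4* X2^3-3* X2"
    by (unfold X2_def Y2_def; insert CS gC hS r3; simp add: field_simps; algebra)
  have u2_2: "h=3* Y2-4* Y2^3"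
    by (unfold X2_def Y2_def; insert CS gC hS r3; simp add: field_simps; algebra)
  note u2 = u2_0 u2_1 u2_2
  have u3_0: "X3^2+Y3^2=1"
    by (unfold X3_def Y3_def; insert CS gC hS r3; simp add: field_simps; algebra)
  have u3_1: "g=4* X3^3-3* X3"
    by (unfold X3_def Y3_def; insert CS gC hS r3; simp add: field_simps; algebra)
  have u3_2: "h=3* Y3-4* Y3^3"
    by (unfold X3_def Y3_def; insert CS gC hS r3; simp add: field_simps; algebra)
  note u3 = u3_0 u3_1 u3_2
  have d1: "dist Oc (P 1) = dist Oc (P 2)" unfolding Oc_def P1 P2 dist_eq_iff
    using circ[OF u1 a0 b0 cc] circ[OF u2 a0 b0 cc] by simp
  have d2: "dist Oc (P 2) = dist Oc (P 3)" unfolding Oc_def P3 P2 dist_eq_iff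
    using circ[OF u3 a0 b0 cc] circ[OF u2 a0 b0 cc] by simp
  have cr: "(a* X2 - a* X1)*(b* Y3 - b* Y2) - (b* Y2 - b* Y1)*(a* X3 - a* X2) = -3* a* b* r/2"
    by (unfold X1_def X2_def X3_def Y1_def Y2_def Y3_def; insert CS r3; simp add: field_simps; algebra)
  have crne: "(a* X2 - a* X1)*(b* Y3 - b* Y2) - (b* Y2 - b* Y1)*(a* X3 - a* X2) \<noteq> 0"
    unfolding cr using a0 b0 r0 by simp
  have uniqO: "Z = Oc" if Z1: "dist Z (P 1) = dist Z (P 2)" and Z2: "dist Z (P 2) = dist Z (P 3)" for Z
  proof -
    obtain z1 z2 where Z: "Z = (z1, z2)" by fastforce
    obtain o1 o2 where Oo: "Oc = (o1, o2)" by fastforce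
    have e1: "(z1-a* X1)^2+(z2-b* Y1)^2 = (z1-a* X2)^2+(z2-b* Y2)^2"
      using Z1 unfolding Z P1 P2 dist_eq_iff .
    have e2: "(z1-a* X2)^2+(z2-b* Y2)^2 = (z1-a* X3)^2+(z2-b* Y3)^2"
      using Z2 unfolding Z P3 P2 dist_eq_iff .
    have f1: "(o1-a* X1)^2+(o2-b* Y1)^2 = (o1-a* X2)^2+(o2-b* Y2)^2"
      using d1 unfolding Oo P1 P2 dist_eq_iff .
    have f2: "(o1-a* X2)^2+(o2-b* Y2)^2 = (o1-a* X3)^2+(o2-b* Y3)^2"
      using d2 unfolding Oo P3 P2 dist_eq_iff .
    have l1: "(z1 - o1) * (a* X2 - a* X1) + (z2 - o2) * (b* Y2 - b* Y1) = 0" using e1 f1 by algebra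
    have l2: "(z1 - o1) * (a* X3 - a* X2) + (z2 - o2) * (b* Y3 - b* Y2) = 0" using e2 f2 by algebra
    from uniq2[OF l1 l2 crne] show ?thesis using Z Oo by simp
  qed
  have circO: "circumcenter (P 1) (P 2) (P 3) = Oc"
    unfolding circumcenter_def
  proof (rule the_equality)
    show "dist Oc (P 1) = dist Oc (P 2) \<and> dist Oc (P 2) = dist Oc (P 3)" using d1 d2 by (rule conjI)
  next
    fix Z assume "dist Z (P 1) = dist Z (P 2) \<and> dist Z (P 2) = dist Z (P 3)"
    thus "Z = Oc" using uniqO by blast
  qed
  have One: "Oc \<noteq> (0,0)"
  proof
    assume "Oc = (0,0)"
    hence "g = 0" "h = 0" using a0 b0 c0 unfolding Oc_def by auto
    thus False using gh1 by simp
  qed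
  have noneq: "\<not> equilateral (P 1) (P 2) (P 3)"
  proof
    assume "equilateral (P 1) (P 2) (P 3)"
    from equi_centroid[OF this] have "centroid3 (P 1) (P 2) (P 3) = Oc" using uniqO by blast
    thus False using cen One by simp
  qed
  have ccne: "circumcenter (P 1) (P 2) (P 3) \<noteq> centroid3 (P 1) (P 2) (P 3)"
    using circO cen One by simp
  define m1 where "m1 = g/a"
  define m2 where "m2 = h/b"
  define K where "K = c^2/k"
  have k0: "k \<noteq> 0" using a0 unfolding k_def by (simp add: add_pos_nonneg)
  have mne: "m1^2+m2^2 \<noteq> 0"
  proof
    assume "m1^2+m2^2 = 0"
    hence "m1 = 0" "m2 = 0" by (simp_all add: sum_power2_eq_zero_iff)
    hence "g = 0" "h = 0" using a0 b0 unfolding m1_def m2_def by auto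
    thus False using gh1 by simp
  qed
  define p0 where "p0 = (K/(m1^2+m2^2)* m1, K/(m1^2+m2^2)* m2)"
  define d where "d = (-m2, m1)"
  have dne: "d \<noteq> 0" using mne unfolding d_def by (auto simp: zero_prod_def)
  have dO: "inner d (circumcenter (P 1) (P 2) (P 3) - centroid3 (P 1) (P 2) (P 3)) = 0"
    unfolding circO cen d_def Oc_def m1_def m2_def using a0 b0 by (simp add: field_simps)
  have online: "Q \<in> line_through p0 (p0 + d)" if "k*(g*(fst Q/a) + h*(snd Q/b)) = c^2" for Q
  proof -
    have "m1 * fst Q + m2 * snd Q = K" using that k0 unfolding m1_def m2_def K_def
      by (simp add: field_simps)
    from on_line[OF this mne] show ?thesis unfolding p0_def d_def by simp
  qed
  have persp: "\<exists>p d. d \<noteq> 0 \<and>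
            inner d (circumcenter (P 1) (P 2) (P 3) - centroid3 (P 1) (P 2) (P 3)) = 0 \<and>
            (\<forall>j k. j \<in> {1,2,3} \<and> k \<in> {1,2,3} \<and> j < k \<longrightarrow>
               line_inter (P j) (P k) (P' j) (P' k) \<in> line_through p (p + d))"
    if H: "\<forall>j k. j \<in> {1,2,3} \<and> k \<in> {1,2,3} \<and> j < k \<longrightarrow>
            \<not> parallel_lines (P j) (P k) (P' j) (P' k)"
  proof -
    have np12: "cross2 (P 2 - P 1) (P' 2 - P' 1) \<noteq> 0" using H[rule_format, of 1 2] by (simp add: parallel_lines_def)
    have np13: "cross2 (P 3 - P 1) (P' 3 - P' 1) \<noteq> 0" using H[rule_format, of 1 3] by (simp add: parallel_lines_def)
    have np23: "cross2 (P 3 - P 2) (P' 3 - P' 2) \<noteq> 0" using H[rule_format, of 2 3] by (simp add: parallel_lines_def)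
    have q12: "line_inter (P 1) (P 2) (P' 1) (P' 2) \<in> line_through p0 (p0 + d)"
    proof -
      define p where "p = C/2 + r* S/2"
      define q where "q = S/2 - r* C/2"
      have pq_0: "p^2+q^2=1"
        by (unfold p_def q_def X1_def X2_def Y1_def Y2_def; insert CS r3 gC hS; simp add: field_simps; algebra)
      have pq_1: "g=p*(4* q^2-1)"
        by (unfold p_def q_def X1_def X2_def Y1_def Y2_def; insert CS r3 gC hS; simp add: field_simps; algebra)
      have pq_2: "h = q*(1-4* p^2)"
        by (unfold p_def q_def X1_def X2_def Y1_def Y2_def; insert CS r3 gC hS; simp add: field_simps; algebra)
      have pq_3: "p* X1+q* Y1 = 1/2"
        by (unfold p_def q_def X1_def X2_def Y1_def Y2_def; insert CS r3 gC hS; simp add: field_simps; algebra)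
      have pq_4: "p* X2+q* Y2=1/2"
        by (unfold p_def q_def X1_def X2_def Y1_def Y2_def; insert CS r3 gC hS; simp add: field_simps; algebra)
      note pq = pq_0 pq_1 pq_2 pq_3 pq_4
      from line_inter_mem[OF np12] have "line_inter (P 1) (P 2) (P' 1) (P' 2) \<in> line_through (P 1) (P 2)"
        "line_inter (P 1) (P 2) (P' 1) (P' 2) \<in> line_through (P' 1) (P' 2)" by auto
      from pairlem[OF a0 b0 k_def cc pq this[unfolded P1 P2 P'1 P'2]] show ?thesis
        unfolding P1 P2 P'1 P'2 by (rule online)
    qed
    have q13: "line_inter (P 1) (P 3) (P' 1) (P' 3) \<in> line_through p0 (p0 + d)"
    proof -
      define p where "p = C/2 - r* S/2"
      define q where "q = S/2 + r* C/2"
      have pq_0: "p^2+q^2=1"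
        by (unfold p_def q_def X1_def X3_def Y1_def Y3_def; insert CS r3 gC hS; simp add: field_simps; algebra)
      have pq_1: "g=p*(4* q^2-1)"
        by (unfold p_def q_def X1_def X3_def Y1_def Y3_def; insert CS r3 gC hS; simp add: field_simps; algebra)
      have pq_2: "h = q*(1-4* p^2)"
        by (unfold p_def q_def X1_def X3_def Y1_def Y3_def; insert CS r3 gC hS; simp add: field_simps; algebra)
      have pq_3: "p* X1+q* Y1 = 1/2"
        by (unfold p_def q_def X1_def X3_def Y1_def Y3_def; insert CS r3 gC hS; simp add: field_simps; algebra)
      have pq_4: "p* X3+q* Y3=1/2"
        by (unfold p_def q_def X1_def X3_def Y1_def Y3_def; insert CS r3 gC hS; simp add: field_simps; algebra)
      note pq = pq_0 pq_1 pq_2 pq_3 pq_4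
      from line_inter_mem[OF np13] have "line_inter (P 1) (P 3) (P' 1) (P' 3) \<in> line_through (P 1) (P 3)"
        "line_inter (P 1) (P 3) (P' 1) (P' 3) \<in> line_through (P' 1) (P' 3)" by auto
      from pairlem[OF a0 b0 k_def cc pq this[unfolded P1 P3 P'1 P'3]] show ?thesis
        unfolding P1 P3 P'1 P'3 by (rule online)
    qed
    have q23: "line_inter (P 2) (P 3) (P' 2) (P' 3) \<in> line_through p0 (p0 + d)"
    proof -
      define p where "p = -C"
      define q where "q = -S"
      have pq_0: "p^2+q^2=1"
        by (unfold p_def q_def X2_def X3_def Y2_def Y3_def; insert CS r3 gC hS; simp add: field_simps; algebra)
      have pq_1: "g=p*(4* q^2-1)"
        by (unfold p_def q_def X2_def X3_def Y2_def Y3_def; insert CS r3 gC hS; simp add: field_simps; algebra)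
      have pq_2: "h = q*(1-4* p^2)"
        by (unfold p_def q_def X2_def X3_def Y2_def Y3_def; insert CS r3 gC hS; simp add: field_simps; algebra)
      have pq_3: "p* X2+q* Y2 = 1/2"
        by (unfold p_def q_def X2_def X3_def Y2_def Y3_def; insert CS r3 gC hS; simp add: field_simps; algebra)
      have pq_4: "p* X3+q* Y3=1/2"
        by (unfold p_def q_def X2_def X3_def Y2_def Y3_def; insert CS r3 gC hS; simp add: field_simps; algebra)
      note pq = pq_0 pq_1 pq_2 pq_3 pq_4
      from line_inter_mem[OF np23] have "line_inter (P 2) (P 3) (P' 2) (P' 3) \<in> line_through (P 2) (P 3)"
        "line_inter (P 2) (P 3) (P' 2) (P' 3) \<in> line_through (P' 2) (P' 3)" by auto
      from pairlem[OF a0 b0 k_def cc pq this[unfolded P2 P3 P'2 P'3]] show ?thesis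
        unfolding P2 P3 P'2 P'3 by (rule online)
    qed
    have "\<forall>j k. j \<in> {1,2,3} \<and> k \<in> {1,2,3} \<and> j < k \<longrightarrow>
               line_inter (P j) (P k) (P' j) (P' k) \<in> line_through p0 (p0 + d)"
      using q12 q13 q23 by auto
    thus ?thesis using dne dO by blast
  qed
  show ?thesis using noneq cen ccne persp by blast
qed

end
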